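(* Let $G\sim G(n,m)$ and fix $\delta\in(0,1)$; assume $1\le m\le(1-\delta)N$. Let $\mu=2m/n$ and let $\lambda=\lambda_n$ be real with $\lambda_n\to0$. Then, as $n\to\infty$, $$\sup_{k}\left|\frac{\mathbb E[e^{\lambda(d_1+d_2-2\mu)}\mid d_3=k]}{\mathbb E[e^{\lambda(d_1+d_2-2\mu)}]}-1\right|\to0,$$ where the supremum is over all $k\in\{0,1,\dots,n-1\}$ with $\mathbb P(d_3=k)>0$.
   Context: $N=\binom n2$; $G(n,m)$ is the uniform distribution over graphs on $[n]$ with exactly $m$ edges, $m=m(n)$. $d_i$ denotes the degree of vertex $i$. *)

theory Defs
  imports "HOL-Analysis.Analysis"
begin

text \<open>Simple graphs on the vertex set [n] = {1..n}, represented by their edge sets: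
  an edge is a 2-element subset of {1..n}.\<close>

definition all_edges :: "nat \<Rightarrow> nat set set" where
  "all_edges n = {e. e \<subseteq> {1..n} \<and> card e = 2}"

definition Gnm :: "nat \<Rightarrow> nat \<Rightarrow> nat set set set" where
  "Gnm n m = {E. E \<subseteq> all_edges n \<and> card E = m}"

definition deg :: "nat set set \<Rightarrow> nat \<Rightarrow> nat" where
  "deg E i = card {e \<in> E. i \<in> e}"

definition Gprob :: "nat \<Rightarrow> nat \<Rightarrow> (nat set set \<Rightarrow> bool) \<Rightarrow> real" where
  "Gprob n m P = real (card {E \<in> Gnm n m. P E}) / real (card (Gnm n m))"

definition Gexp :: "nat \<Rightarrow> nat \<Rightarrow> (nat set set \<Rightarrow> real) \<Rightarrow> real" where
  "Gexp n m f = (\<Sum>E\<in>Gnm n m. f E) / real (card (Gnm n m))"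

definition Gcond_exp :: "nat \<Rightarrow> nat \<Rightarrow> (nat set set \<Rightarrow> real) \<Rightarrow> (nat set set \<Rightarrow> bool) \<Rightarrow> real" where
  "Gcond_exp n m f P = (\<Sum>E\<in>{E \<in> Gnm n m. P E}. f E) / real (card {E \<in> Gnm n m. P E})"

end

theory Submission
  imports Defs
begin

definition SS :: "'a set \<Rightarrow> 'a set \<Rightarrow> nat \<Rightarrow> nat \<Rightarrow> 'a set set" where
  "SS A B k j = {E. E \<subseteq> A \<union> B \<and> card (E \<inter> A) = k \<and> card (E \<inter> B) = j}"

lemma SS_swap: "SS A B k j = SS B A j k"
  unfolding SS_def by (auto simp: Un_commute)

lemma SS_finite: "finite A \<Longrightarrow> finite B \<Longrightarrow> finite (SS A B k j)"
  unfolding SS_def by (rule finite_subset[of _ "Pow (A \<union> B)"]) auto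

lemma DC:
  assumes fA: "finite A" and fB: "finite B" and dis: "A \<inter> B = {}"
  shows "(\<Sum>E\<in>SS A B k j. \<Sum>f\<in>B-E. g (insert f E) f)
       = (\<Sum>E\<in>SS A B k (Suc j). \<Sum>f\<in>E\<inter>B. g E f)"
proof -
  let ?S1 = "Sigma (SS A B k j) (\<lambda>E. B - E)"
  let ?S2 = "Sigma (SS A B k (Suc j)) (\<lambda>E. E \<inter> B)"
  let ?h = "\<lambda>(E, f). (insert f E, f)"
  have fin: "finite E" if "E \<in> SS A B k j'" for E j'
    using that fA fB unfolding SS_def by (auto intro: finite_subset)
  have bij: "bij_betw ?h ?S1 ?S2"
  proof (rule bij_betw_byWitness[where f' = "\<lambda>(E, f). (E - {f}, f)"])
    show "\<forall>a\<in>?S1. (\<lambda>(E, f). (E - {f}, f)) (?h a) = a" by auto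
    show "\<forall>a\<in>?S2. ?h ((\<lambda>(E, f). (E - {f}, f)) a) = a" by auto
    show "?h ` ?S1 \<subseteq> ?S2"
    proof clarsimp
      fix E f assume E: "E \<in> SS A B k j" and f: "f \<in> B" "f \<notin> E"
      have fE: "finite E" using fin E by blast
      have "f \<notin> A" using f dis by auto
      then have "insert f E \<inter> A = E \<inter> A" by auto
      moreover have "insert f E \<inter> B = insert f (E \<inter> B)" using f by auto
      moreover have "card (insert f (E \<inter> B)) = Suc (card (E \<inter> B))"
        using fE f by auto
      ultimately show "insert f E \<in> SS A B k (Suc j)"
        using E f unfolding SS_def by auto
    qed
    show "(\<lambda>(E, f). (E - {f}, f)) ` ?S2 \<subseteq> ?S1"
    proof clarsimp
      fix E f assume E: "E \<in> SS A B k (Suc j)" and f: "f \<in> E" "f \<in> B"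
      have fE: "finite E" using fin E by blast
      have "f \<notin> A" using f dis by auto
      then have "(E - {f}) \<inter> A = E \<inter> A" by auto
      moreover have "(E - {f}) \<inter> B = (E \<inter> B) - {f}" by auto
      moreover have "card ((E \<inter> B) - {f}) = card (E \<inter> B) - 1"
        using fE f by auto
      ultimately show "E - {f} \<in> SS A B k j"
        using E f unfolding SS_def by auto
    qed
  qed
  have "(\<Sum>E\<in>SS A B k j. \<Sum>f\<in>B-E. g (insert f E) f) = (\<Sum>(E,f)\<in>?S1. g (insert f E) f)"
    by (rule sum.Sigma) (auto simp: SS_finite fA fB)
  also have "\<dots> = (\<Sum>x\<in>?S1. (\<lambda>(E,f). g E f) (?h x))"
    by (rule sum.cong) auto
  also have "\<dots> = (\<Sum>(E,f)\<in>?S2. g E f)"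
    using sum.reindex_bij_betw[OF bij, of "\<lambda>(E,f). g E f"] by simp
  also have "\<dots> = (\<Sum>E\<in>SS A B k (Suc j). \<Sum>f\<in>E\<inter>B. g E f)"
    by (rule sum.Sigma[symmetric]) (auto simp: SS_finite fA fB)
  finally show ?thesis .
qed

lemma DC_A:
  assumes fA: "finite A" and fB: "finite B" and dis: "A \<inter> B = {}"
  shows "(\<Sum>E\<in>SS A B k j. \<Sum>f\<in>A-E. g (insert f E) f)
       = (\<Sum>E\<in>SS A B (Suc k) j. \<Sum>f\<in>E\<inter>A. g E f)"
  using DC[OF fB fA, where k=j and j=k and g=g] dis by (simp add: SS_swap[of A B] Int_commute)

locale core =
  fixes A B :: "'a set" and \<phi> :: "'a \<Rightarrow> real" and D :: real and mm :: nat
  assumes fA: "finite A" and fB: "finite B" and dis: "A \<inter> B = {}"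
    and D: "(\<Sum>e\<in>B. \<bar>exp (\<phi> e) - 1\<bar>) \<le> D"
    and DB: "2 * D \<le> real (card B) - real mm"
begin

definition c :: "nat \<Rightarrow> nat \<Rightarrow> real" where "c k j = real (card (SS A B k j))"
definition wB :: "'a set \<Rightarrow> real" where "wB E = exp (\<Sum>e\<in>E \<inter> B. \<phi> e)"
definition G :: "nat \<Rightarrow> nat \<Rightarrow> real" where "G k j = (\<Sum>E\<in>SS A B k j. wB E)"
definition \<rho> :: "nat \<Rightarrow> nat \<Rightarrow> real" where "\<rho> k j = G k j / c k j"

lemma finS: "finite (SS A B k j)" using SS_finite[OF fA fB] .

lemma finE: "E \<in> SS A B k j \<Longrightarrow> finite E"
  using fA fB unfolding SS_def by (auto intro: finite_subset)

lemma cardAE: "E \<in> SS A B k j \<Longrightarrow> card (A - E) = card A - k"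
proof -
  assume E: "E \<in> SS A B k j"
  have "A - E = A - (E \<inter> A)" by auto
  then show ?thesis using E fA card_Diff_subset[of "E \<inter> A" A] unfolding SS_def
    by (auto intro: finite_subset)
qed

lemma cardBE: "E \<in> SS A B k j \<Longrightarrow> card (B - E) = card B - j"
proof -
  assume E: "E \<in> SS A B k j"
  have "B - E = B - (E \<inter> B)" by auto
  then show ?thesis using E fB card_Diff_subset[of "E \<inter> B" B] unfolding SS_def
    by (auto intro: finite_subset)
qed

lemma cA: "real (card A - k) * c k j = real (Suc k) * c (Suc k) j"
proof -
  have "(\<Sum>E\<in>SS A B k j. \<Sum>f\<in>A-E. (1::real)) = (\<Sum>E\<in>SS A B (Suc k) j. \<Sum>f\<in>E\<inter>A. (1::real))"
    using DC_A[OF fA fB dis, where g = "\<lambda>_ _. (1::real)"] by simp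
  also have "\<dots> = (\<Sum>E\<in>SS A B (Suc k) j. real (Suc k))"
    by (rule sum.cong) (auto simp: SS_def)
  also have "(\<Sum>E\<in>SS A B k j. \<Sum>f\<in>A-E. (1::real)) = (\<Sum>E\<in>SS A B k j. real (card A - k))"
    by (rule sum.cong) (auto simp: cardAE)
  finally show ?thesis unfolding c_def by (simp add: mult.commute)
qed

lemma cB: "real (card B - j) * c k j = real (Suc j) * c k (Suc j)"
proof -
  have "(\<Sum>E\<in>SS A B k j. \<Sum>f\<in>B-E. (1::real)) = (\<Sum>E\<in>SS A B k (Suc j). \<Sum>f\<in>E\<inter>B. (1::real))"
    using DC[OF fA fB dis, where g = "\<lambda>_ _. (1::real)"] by simp
  also have "\<dots> = (\<Sum>E\<in>SS A B k (Suc j). real (Suc j))"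
    by (rule sum.cong) (auto simp: SS_def)
  also have "(\<Sum>E\<in>SS A B k j. \<Sum>f\<in>B-E. (1::real)) = (\<Sum>E\<in>SS A B k j. real (card B - j))"
    by (rule sum.cong) (auto simp: cardBE)
  finally show ?thesis unfolding c_def by (simp add: mult.commute)
qed

lemma GA: "real (card A - k) * G k j = real (Suc k) * G (Suc k) j"
proof -
  have "(\<Sum>E\<in>SS A B k j. \<Sum>f\<in>A-E. wB (insert f E)) = (\<Sum>E\<in>SS A B (Suc k) j. \<Sum>f\<in>E\<inter>A. wB E)"
    using DC_A[OF fA fB dis, where g = "\<lambda>E _. wB E"] by simp
  also have "\<dots> = (\<Sum>E\<in>SS A B (Suc k) j. real (Suc k) * wB E)"
    by (rule sum.cong) (auto simp: SS_def)
  also have "(\<Sum>E\<in>SS A B k j. \<Sum>f\<in>A-E. wB (insert f E)) = (\<Sum>E\<in>SS A B k j. real (card A - k) * wB E)"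
  proof (rule sum.cong)
    fix E assume E: "E \<in> SS A B k j"
    have "\<And>f. f \<in> A - E \<Longrightarrow> wB (insert f E) = wB E"
    proof -
      fix f assume "f \<in> A - E"
      then have "insert f E \<inter> B = E \<inter> B" using dis by auto
      then show "wB (insert f E) = wB E" unfolding wB_def by simp
    qed
    then show "(\<Sum>f\<in>A-E. wB (insert f E)) = real (card A - k) * wB E"
      using cardAE[OF E] by simp
  qed simp
  finally show ?thesis unfolding G_def by (simp add: sum_distrib_left)
qed

lemma GB: "real (Suc j) * G k (Suc j) = (\<Sum>E\<in>SS A B k j. wB E * (\<Sum>f\<in>B-E. exp (\<phi> f)))"
proof -
  have "(\<Sum>E\<in>SS A B k j. \<Sum>f\<in>B-E. wB (insert f E)) = (\<Sum>E\<in>SS A B k (Suc j). \<Sum>f\<in>E\<inter>B. wB E)"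
    using DC[OF fA fB dis, where g = "\<lambda>E _. wB E"] by simp
  also have "\<dots> = (\<Sum>E\<in>SS A B k (Suc j). real (Suc j) * wB E)"
    by (rule sum.cong) (auto simp: SS_def)
  also have "(\<Sum>E\<in>SS A B k j. \<Sum>f\<in>B-E. wB (insert f E)) = (\<Sum>E\<in>SS A B k j. wB E * (\<Sum>f\<in>B-E. exp (\<phi> f)))"
  proof (rule sum.cong)
    fix E assume E: "E \<in> SS A B k j"
    have "\<And>f. f \<in> B - E \<Longrightarrow> wB (insert f E) = wB E * exp (\<phi> f)"
    proof -
      fix f assume f: "f \<in> B - E"
      then have "insert f E \<inter> B = insert f (E \<inter> B)" by auto
      moreover have "finite (E \<inter> B)" using finE[OF E] by auto
      ultimately show "wB (insert f E) = wB E * exp (\<phi> f)" unfolding wB_def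
        using f by (simp add: exp_add mult.commute)
    qed
    then show "(\<Sum>f\<in>B-E. wB (insert f E)) = wB E * (\<Sum>f\<in>B-E. exp (\<phi> f))"
      by (simp add: sum_distrib_left)
  qed simp
  finally show ?thesis unfolding G_def by (simp add: sum_distrib_left)
qed

lemma sbound: "E \<in> SS A B k j \<Longrightarrow> \<bar>(\<Sum>f\<in>B-E. exp (\<phi> f)) - real (card B - j)\<bar> \<le> D"
proof -
  assume E: "E \<in> SS A B k j"
  have "(\<Sum>f\<in>B-E. exp (\<phi> f)) - real (card B - j) = (\<Sum>f\<in>B-E. exp (\<phi> f) - 1)"
    using cardBE[OF E] by (simp add: sum_subtractf)
  also have "\<bar>\<dots>\<bar> \<le> (\<Sum>f\<in>B-E. \<bar>exp (\<phi> f) - 1\<bar>)" by (rule sum_abs)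
  also have "\<dots> \<le> (\<Sum>f\<in>B. \<bar>exp (\<phi> f) - 1\<bar>)"
    by (rule sum_mono2[OF fB]) auto
  finally show ?thesis using D by linarith
qed

lemma Gpos: "c k j > 0 \<Longrightarrow> G k j > 0"
  unfolding c_def G_def wB_def
  by (intro sum_pos finS) (auto simp: card_gt_0_iff)

lemma stepA: "c (Suc k) j > 0 \<Longrightarrow> c k j > 0 \<and> \<rho> (Suc k) j = \<rho> k j"
proof -
  assume h: "c (Suc k) j > 0"
  have c0: "c k j \<ge> 0" unfolding c_def by simp
  from cA[of k j] h have pos: "real (card A - k) * c k j > 0" by simp
  then have ck: "c k j > 0" using c0 by (metis mult_eq_0_iff order_le_less zero_less_mult_iff of_nat_0_le_iff)
  have ak: "real (card A - k) > 0" using pos c0 by (metis ck zero_less_mult_pos2)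
  have "\<rho> (Suc k) j = (real (card A - k) * G k j / real (Suc k)) / (real (card A - k) * c k j / real (Suc k))"
    unfolding \<rho>_def using cA[of k j] GA[of k j]
    by (simp add: field_simps del: of_nat_Suc)
  also have "\<dots> = \<rho> k j"
  proof -
    have gen: "\<And>a s g cc. (a::real) \<noteq> 0 \<Longrightarrow> s \<noteq> 0 \<Longrightarrow> (a*g/s)/(a*cc/s) = g/cc"
      by (case_tac "cc = 0") (auto simp: field_simps)
    show ?thesis unfolding \<rho>_def by (rule gen) (use ak in simp_all)
  qed
  finally show ?thesis using ck by simp
qed

lemma chainA: "c k j > 0 \<Longrightarrow> c 0 j > 0 \<and> \<rho> k j = \<rho> 0 j"
  by (induction k) (use stepA in auto)


lemma D0: "D \<ge> 0"
proof -
  have "0 \<le> (\<Sum>e\<in>B. \<bar>exp (\<phi> e) - 1\<bar>)" by (rule sum_nonneg) simp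
  then show ?thesis using D by linarith
qed

definition \<beta> :: real where "\<beta> = exp (2 * D / (real (card B) - real mm))"

lemma beta_ge1: "\<beta> \<ge> 1"
  unfolding \<beta>_def using D0 DB by (cases "real (card B) - real mm = 0") auto

lemma stepB:
  assumes j: "j < mm" and h: "c k (Suc j) > 0"
  shows "c k j > 0 \<and> \<rho> k (Suc j) \<le> \<beta> * \<rho> k j \<and> \<rho> k j \<le> \<beta> * \<rho> k (Suc j)"
proof -
  define b where "b = real (card B - j)"
  have c0: "c k j \<ge> 0" unfolding c_def by simp
  from cB[of j k] h have pos: "b * c k j > 0" unfolding b_def by simp
  have b0: "b \<ge> 0" unfolding b_def by simp
  have ck: "c k j > 0" using pos c0 b0 by (metis mult_eq_0_iff order_le_less zero_less_mult_iff)
  have bpos: "b > 0" using pos ck by (metis zero_less_mult_pos2)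
  then have jB: "j < card B" unfolding b_def by simp
  then have bB: "b = real (card B) - real j" unfolding b_def by simp
  have bge: "b \<ge> real (card B) - real mm + 1" using bB j by simp
  have Gk: "G k j > 0" using Gpos[OF ck] .
  have up: "real (Suc j) * G k (Suc j) \<le> (b + D) * G k j"
  proof -
    have "real (Suc j) * G k (Suc j) \<le> (\<Sum>E\<in>SS A B k j. wB E * (b + D))"
      unfolding GB
    proof (rule sum_mono)
      fix E assume E: "E \<in> SS A B k j"
      have "(\<Sum>f\<in>B-E. exp (\<phi> f)) \<le> b + D" using sbound[OF E] unfolding b_def by linarith
      then show "wB E * (\<Sum>f\<in>B-E. exp (\<phi> f)) \<le> wB E * (b + D)"
        unfolding wB_def by (intro mult_left_mono) auto
    qed
    then show ?thesis unfolding G_def by (simp add: sum_distrib_left mult.commute)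
  qed
  have lo: "real (Suc j) * G k (Suc j) \<ge> (b - D) * G k j"
  proof -
    have "real (Suc j) * G k (Suc j) \<ge> (\<Sum>E\<in>SS A B k j. wB E * (b - D))"
      unfolding GB
    proof (rule sum_mono)
      fix E assume E: "E \<in> SS A B k j"
      have "(\<Sum>f\<in>B-E. exp (\<phi> f)) \<ge> b - D" using sbound[OF E] unfolding b_def by linarith
      then show "wB E * (\<Sum>f\<in>B-E. exp (\<phi> f)) \<ge> wB E * (b - D)"
        unfolding wB_def by (intro mult_left_mono) auto
    qed
    then show ?thesis unfolding G_def by (simp add: sum_distrib_left mult.commute)
  qed
  have cc: "real (Suc j) * c k (Suc j) = b * c k j" using cB[of j k] unfolding b_def by simp
  have rho1: "\<rho> k (Suc j) = real (Suc j) * G k (Suc j) / (b * c k j)"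
    unfolding \<rho>_def cc[symmetric] by simp
  define \<eta> where "\<eta> = D / b"
  have eta0: "\<eta> \<ge> 0" unfolding \<eta>_def using D0 bpos by simp
  have eta2: "2 * \<eta> \<le> 1" unfolding \<eta>_def using bpos bge DB by (simp add: field_simps)
  have "\<rho> k (Suc j) \<le> (b + D) * G k j / (b * c k j)"
    unfolding rho1 using up bpos ck by (intro divide_right_mono) auto
  also have "\<dots> = (1 + \<eta>) * \<rho> k j" unfolding \<eta>_def \<rho>_def using bpos ck by (simp add: field_simps)
  finally have U: "\<rho> k (Suc j) \<le> (1 + \<eta>) * \<rho> k j" .
  have "(1 - \<eta>) * \<rho> k j = (b - D) * G k j / (b * c k j)"
    unfolding \<eta>_def \<rho>_def using bpos ck by (simp add: field_simps)
  also have "\<dots> \<le> \<rho> k (Suc j)"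
    unfolding rho1 using lo bpos ck by (intro divide_right_mono) auto
  finally have L: "(1 - \<eta>) * \<rho> k j \<le> \<rho> k (Suc j)" .
  have rpos: "\<rho> k j > 0" unfolding \<rho>_def using Gk ck by simp
  have e2: "1 + 2 * \<eta> \<le> \<beta>"
  proof -
    have "1 + 2 * \<eta> \<le> exp (2 * \<eta>)" by (rule exp_ge_add_one_self)
    also have "2 * \<eta> \<le> 2 * D / (real (card B) - real mm)"
    proof (cases "D = 0")
      case True then show ?thesis unfolding \<eta>_def by simp
    next
      case False
      then have "real (card B) - real mm > 0" using D0 DB by linarith
      then show ?thesis unfolding \<eta>_def using bge D0
        by (simp add: frac_le)
    qed
    then have "exp (2 * \<eta>) \<le> \<beta>" unfolding \<beta>_def by simp
    finally show ?thesis .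
  qed
  have "\<rho> k (Suc j) \<le> (1 + 2 * \<eta>) * \<rho> k j"
    using U mult_right_mono[of "1+\<eta>" "1+2*\<eta>" "\<rho> k j"] eta0 rpos by linarith
  also have "\<dots> \<le> \<beta> * \<rho> k j" using e2 rpos by (intro mult_right_mono) auto
  finally have R1: "\<rho> k (Suc j) \<le> \<beta> * \<rho> k j" .
  have "\<rho> k j \<le> (1 + 2 * \<eta>) * ((1 - \<eta>) * \<rho> k j)"
  proof -
    have "(1 + 2 * \<eta>) * (1 - \<eta>) \<ge> 1" using eta0 eta2 mult_left_mono[of "\<eta>*2" 1 \<eta>] by (simp add: algebra_simps)
    then have "1 * \<rho> k j \<le> ((1 + 2 * \<eta>) * (1 - \<eta>)) * \<rho> k j"
      using rpos by (intro mult_right_mono) auto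
    then show ?thesis by (simp add: mult.assoc)
  qed
  also have "\<dots> \<le> (1 + 2 * \<eta>) * \<rho> k (Suc j)" using L eta0 by (intro mult_left_mono) auto
  also have "\<dots> \<le> \<beta> * \<rho> k (Suc j)"
  proof -
    have "(1 - \<eta>) * \<rho> k j \<ge> 0" using eta2 rpos by (intro mult_nonneg_nonneg) auto
    then have "\<rho> k (Suc j) \<ge> 0" using L by linarith
    then show ?thesis using e2 by (intro mult_right_mono) auto
  qed
  finally show ?thesis using R1 ck by simp
qed


lemma chainB:
  "j + d \<le> mm \<Longrightarrow> c k (j + d) > 0 \<Longrightarrow>
     c k j > 0 \<and> \<rho> k (j + d) \<le> \<beta> ^ d * \<rho> k j \<and> \<rho> k j \<le> \<beta> ^ d * \<rho> k (j + d)"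
proof (induction d)
  case 0 then show ?case by simp
next
  case (Suc d)
  have s: "c k (j + d) > 0 \<and> \<rho> k (Suc (j + d)) \<le> \<beta> * \<rho> k (j + d) \<and> \<rho> k (j + d) \<le> \<beta> * \<rho> k (Suc (j + d))"
    using stepB[of "j + d" k] Suc.prems by simp
  then have ih: "c k j > 0 \<and> \<rho> k (j + d) \<le> \<beta> ^ d * \<rho> k j \<and> \<rho> k j \<le> \<beta> ^ d * \<rho> k (j + d)"
    using Suc.IH Suc.prems by simp
  have b0: "\<beta> \<ge> 0" using beta_ge1 by simp
  have bd: "\<beta> ^ d \<ge> 0" using b0 by simp
  have "\<rho> k (j + Suc d) \<le> \<beta> * \<rho> k (j + d)" using s by simp
  also have "\<dots> \<le> \<beta> * (\<beta> ^ d * \<rho> k j)" using ih b0 by (intro mult_left_mono) auto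
  finally have 1: "\<rho> k (j + Suc d) \<le> \<beta> ^ Suc d * \<rho> k j" by (simp add: mult.assoc)
  have "\<rho> k j \<le> \<beta> ^ d * \<rho> k (j + d)" using ih by simp
  also have "\<dots> \<le> \<beta> ^ d * (\<beta> * \<rho> k (Suc (j + d)))" using s bd by (intro mult_left_mono) auto
  finally have 2: "\<rho> k j \<le> \<beta> ^ Suc d * \<rho> k (j + Suc d)" by (simp add: ac_simps)
  show ?case using 1 2 ih by simp
qed

lemma rho_nonneg: "\<rho> k j \<ge> 0"
  unfolding \<rho>_def G_def c_def wB_def by (intro divide_nonneg_nonneg sum_nonneg) auto

lemma core_main:
  assumes k: "k \<le> mm" and k': "k' \<le> mm" and ck: "c k (mm - k) > 0" and ck': "c k' (mm - k') > 0"
    and kn: "k \<le> k' + nn" and kn': "k' \<le> k + nn"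
  shows "\<rho> k (mm - k) \<le> \<beta> ^ nn * \<rho> k' (mm - k')"
proof -
  have a: "\<rho> k (mm - k) = \<rho> 0 (mm - k)" "c 0 (mm - k) > 0" using chainA[OF ck] by auto
  have a': "\<rho> k' (mm - k') = \<rho> 0 (mm - k')" "c 0 (mm - k') > 0" using chainA[OF ck'] by auto
  have b1: "\<beta> \<ge> 1" by (rule beta_ge1)
  show ?thesis
  proof (cases "k \<le> k'")
    case True
    define d where "d = k' - k"
    have e: "mm - k' + d = mm - k" unfolding d_def using True k' by simp
    have "\<rho> 0 (mm - k) \<le> \<beta> ^ d * \<rho> 0 (mm - k')"
      using chainB[of "mm - k'" d 0] e a k by simp
    also have "\<dots> \<le> \<beta> ^ nn * \<rho> 0 (mm - k')"
      using b1 kn' True rho_nonneg unfolding d_def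
      by (intro mult_right_mono power_increasing) auto
    finally show ?thesis using a a' by simp
  next
    case False
    define d where "d = k - k'"
    have e: "mm - k + d = mm - k'" unfolding d_def using False k by simp
    have "\<rho> 0 (mm - k) \<le> \<beta> ^ d * \<rho> 0 (mm - k')"
      using chainB[of "mm - k" d 0] e a' k' by simp
    also have "\<dots> \<le> \<beta> ^ nn * \<rho> 0 (mm - k')"
      using b1 kn False rho_nonneg unfolding d_def
      by (intro mult_right_mono power_increasing) auto
    finally show ?thesis using a a' by simp
  qed
qed

end


lemma real_choose2: "real (n choose 2) = real n * (real n - 1) / 2"
proof (induction n)
  case 0 then show ?case by simp
next
  case (Suc n)
  have "Suc n choose (Suc (Suc 0)) = (n choose (Suc 0)) + (n choose (Suc (Suc 0)))" by (rule binomial_Suc_Suc)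
  then have "Suc n choose 2 = (n choose 2) + n" by (simp add: numeral_2_eq_2)
  then have "real (Suc n choose 2) = real (n choose 2) + real n" by simp
  then show ?case using Suc.IH by (simp add: field_simps)
qed

lemma card2_ex: "card e = 2 \<Longrightarrow> a \<in> e \<Longrightarrow> \<exists>x. x \<noteq> a \<and> e = {a, x}"
  by (auto simp: card_2_iff)

lemma edges_finite: "finite (all_edges n)"
  unfolding all_edges_def by (rule finite_subset[of _ "Pow {1..n}"]) auto

lemma edges_card: "card (all_edges n) = n choose 2"
  unfolding all_edges_def using n_subsets[of "{1..n}" 2] by simp

lemma edges_at_card: "card {e \<in> all_edges n. a \<in> e} \<le> n - 1" if "a \<in> {1..n}"
proof -
  have "{e \<in> all_edges n. a \<in> e} \<subseteq> (\<lambda>x. {a, x}) ` ({1..n} - {a})"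
  proof
    fix e assume e: "e \<in> {e \<in> all_edges n. a \<in> e}"
    then obtain x where x: "x \<noteq> a" "e = {a, x}" using card2_ex[of e a] unfolding all_edges_def by auto
    then have "x \<in> {1..n}" using e unfolding all_edges_def by auto
    then show "e \<in> (\<lambda>x. {a, x}) ` ({1..n} - {a})" using x by auto
  qed
  then have "card {e \<in> all_edges n. a \<in> e} \<le> card ((\<lambda>x. {a, x}) ` ({1..n} - {a}))"
    by (intro card_mono) auto
  also have "\<dots> \<le> card ({1..n} - {a})" by (rule card_image_le) auto
  also have "\<dots> = n - 1" using that by simp
  finally show ?thesis .
qed

lemma edges_13: "a \<noteq> 3 \<Longrightarrow> {e \<in> all_edges n. 3 \<in> e \<and> a \<in> e} \<subseteq> {{3, a}}"
  unfolding all_edges_def by (auto simp: card_2_iff)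

lemma abs_exp_m1: "\<bar>exp (x::real) - 1\<bar> \<le> exp \<bar>x\<bar> - 1"
proof (cases "x \<ge> 0")
  case True then have "exp x \<ge> 1" using exp_ge_add_one_self[of x] by linarith
  then show ?thesis using True by simp
next
  case False
  have "1 - exp x \<le> - x" using exp_ge_add_one_self[of x] by linarith
  moreover have "1 + (-x) \<le> exp (-x)" by (rule exp_ge_add_one_self)
  moreover have "exp x \<le> 1" using False by simp
  ultimately show ?thesis using False by simp
qed

lemma deg_sum: "finite E \<Longrightarrow> real (deg E i) = (\<Sum>e\<in>E. of_bool (i \<in> e))"
proof -
  assume f: "finite E"
  have "(\<Sum>e\<in>E. of_bool (i \<in> e) :: real) = (\<Sum>e\<in>{e \<in> E. i \<in> e}. 1)"
    using sum.inter_filter[OF f, of "\<lambda>_. (1::real)" "\<lambda>e. i \<in> e"] by (simp add: of_bool_def)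
  then show ?thesis unfolding deg_def by simp
qed


lemma fixed_n:
  fixes n m :: nat and l \<delta> :: real
  assumes n3: "n \<ge> 3" and \<delta>0: "0 < \<delta>" and mle: "real m \<le> (1-\<delta>) * real (n choose 2)"
    and c1: "exp (2*\<bar>l\<bar>) - 1 \<le> 1" and big: "5 * real n \<le> \<delta> * real (n choose 2)"
  defines "f \<equiv> \<lambda>E. exp (l * (real (deg E 1) + real (deg E 2) - 2 * (2 * real m / real n)))"
  defines "Kset \<equiv> {k. k < n \<and> Gprob n m (\<lambda>E. deg E 3 = k) > 0}"
  shows "Kset \<noteq> {} \<and> (\<forall>k\<in>Kset. \<bar>Gcond_exp n m f (\<lambda>E. deg E 3 = k) / Gexp n m f - 1\<bar>
            \<le> exp (4*\<bar>l\<bar> + 32*(exp(2*\<bar>l\<bar>)-1)/\<delta>) - 1)"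
proof -
  define U where "U = all_edges n"
  define A where "A = {e\<in>U. 3 \<in> e}"
  define B where "B = {e\<in>U. 3 \<notin> e}"
  define \<phi> where "\<phi> = (\<lambda>e::nat set. l * (of_bool (1 \<in> e) + of_bool (2 \<in> e)))"
  define cc where "cc = exp (2*\<bar>l\<bar>) - 1"
  define D where "D = 2 * real n * cc"
  define N where "N = real (n choose 2)"
  have cc0: "cc \<ge> 0" unfolding cc_def by simp
  have fU: "finite U" unfolding U_def by (rule edges_finite)
  have fA: "finite A" and fB: "finite B" unfolding A_def B_def using fU by auto
  have dis: "A \<inter> B = {}" and AB: "A \<union> B = U" unfolding A_def B_def by auto
  have cardU: "real (card U) = N" unfolding U_def N_def edges_card ..
  have cardA: "card A \<le> n - 1" unfolding A_def U_def by (rule edges_at_card) (use n3 in auto)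
  have cardAB: "card A + card B = card U" using card_Un_disjoint[OF fA fB dis] AB by simp
  have cardB: "real (card B) \<ge> N - real n" using cardAB cardA cardU n3 by linarith
  have N2: "N = real n * (real n - 1) / 2" unfolding N_def by (rule real_choose2)
  have Dbound: "(\<Sum>e\<in>B. \<bar>exp (\<phi> e) - 1\<bar>) \<le> D"
  proof -
    have pt: "\<bar>exp (\<phi> e) - 1\<bar> \<le> (if 1 \<in> e \<or> 2 \<in> e then cc else 0)" for e
    proof (cases "1 \<in> e \<or> 2 \<in> e")
      case True
      have "\<bar>\<phi> e\<bar> \<le> 2 * \<bar>l\<bar>" unfolding \<phi>_def by (simp add: abs_mult)
      then have "exp \<bar>\<phi> e\<bar> - 1 \<le> cc" unfolding cc_def by simp
      then show ?thesis using abs_exp_m1[of "\<phi> e"] True by simp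
    next
      case False then show ?thesis unfolding \<phi>_def by simp
    qed
    have "(\<Sum>e\<in>B. \<bar>exp (\<phi> e) - 1\<bar>) \<le> (\<Sum>e\<in>U. \<bar>exp (\<phi> e) - 1\<bar>)"
      by (rule sum_mono2[OF fU]) (auto simp: B_def)
    also have "\<dots> \<le> (\<Sum>e\<in>U. (if 1 \<in> e \<or> 2 \<in> e then cc else 0))"
      by (rule sum_mono) (rule pt)
    also have "\<dots> = cc * real (card {e\<in>U. 1 \<in> e \<or> 2 \<in> e})"
      using sum.inter_filter[OF fU, of "\<lambda>_. cc" "\<lambda>e. 1 \<in> e \<or> 2 \<in> e"] by (simp add: mult.commute)
    also have "\<dots> \<le> cc * (2 * real n)"
    proof -
      have "{e\<in>U. 1 \<in> e \<or> 2 \<in> e} = {e\<in>U. 1 \<in> e} \<union> {e\<in>U. 2 \<in> e}" by auto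
      then have "card {e\<in>U. 1 \<in> e \<or> 2 \<in> e} \<le> card {e\<in>U. 1 \<in> e} + card {e\<in>U. 2 \<in> e}"
        by (simp add: card_Un_le)
      moreover have "card {e\<in>U. 1 \<in> e} \<le> n - 1" unfolding U_def by (rule edges_at_card) (use n3 in auto)
      moreover have "card {e\<in>U. 2 \<in> e} \<le> n - 1" unfolding U_def by (rule edges_at_card) (use n3 in auto)
      ultimately have "real (card {e\<in>U. 1 \<in> e \<or> 2 \<in> e}) \<le> 2 * real n" by linarith
      then show ?thesis using cc0 by (intro mult_left_mono) auto
    qed
    finally show ?thesis unfolding D_def by (simp add: ac_simps)
  qed
  have DB: "2 * D \<le> real (card B) - real m"
  proof -
    have "real n * cc \<le> real n * 1" using c1 unfolding cc_def by (intro mult_left_mono) auto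
    then have "2 * D \<le> 4 * real n" unfolding D_def by simp
    then show ?thesis using cardB mle big unfolding N_def by (simp add: algebra_simps)
  qed
  interpret core A B \<phi> D m
    by unfold_locales (use fA fB dis Dbound DB in auto)
  have Npos: "N > 0" using n3 unfolding N2 by simp
  have betan: "\<beta> ^ n \<le> exp (32 * cc / \<delta>)"
  proof -
    define M where "M = real (card B) - real m"
    have M: "M \<ge> \<delta> * N / 2" unfolding M_def using cardB mle big unfolding N_def by (simp add: algebra_simps)
    have "\<delta> * N > 0" using Npos \<delta>0 by simp
    then have Mpos: "M > 0" using M by linarith
    have "real n * real n * \<delta> \<le> 8 * M"
    proof -
      have "real n * real n \<le> 2 * (real n * (real n - 1))" using n3 by (simp add: algebra_simps power2_eq_square)
      then have "real n * real n * \<delta> \<le> 2 * (real n * (real n - 1)) * \<delta>" using \<delta>0 by (intro mult_right_mono) auto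
      also have "\<dots> = 4 * \<delta> * N" unfolding N2 by simp
      finally show ?thesis using M by linarith
    qed
    then have "real n * real n * \<delta> * (4 * cc) \<le> 8 * M * (4 * cc)" using cc0 by (intro mult_right_mono) auto
    then have key: "real n * (2 * D) * \<delta> \<le> 32 * cc * M" unfolding D_def by (simp add: algebra_simps)
    have "real n * (2 * D / M) \<le> 32 * cc / \<delta>"
      using key Mpos \<delta>0 by (simp add: field_simps)
    then have "exp (real n * (2 * D / M)) \<le> exp (32 * cc / \<delta>)" by simp
    then show ?thesis unfolding \<beta>_def M_def exp_of_nat_mult .
  qed
  define X where "X = (\<lambda>k. {E \<in> Gnm n m. deg E 3 = k})"
  have GnmU: "E \<subseteq> U" "finite E" "card E = m" if "E \<in> Gnm n m" for E
    using that fU unfolding Gnm_def U_def all_edges_def by (auto intro: finite_subset)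
  have cardsplit: "card E = card (E \<inter> A) + card (E \<inter> B)" if "E \<subseteq> U" for E
  proof -
    have "E = (E \<inter> A) \<union> (E \<inter> B)" using that AB by auto
    moreover have "finite E" using that fU by (auto intro: finite_subset)
    moreover have "(E \<inter> A) \<inter> (E \<inter> B) = {}" using dis by auto
    ultimately show ?thesis using card_Un_disjoint[of "E \<inter> A" "E \<inter> B"] by simp
  qed
  have deg3: "deg E 3 = card (E \<inter> A)" if "E \<subseteq> U" for E
  proof -
    have "{e \<in> E. 3 \<in> e} = E \<inter> A" using that unfolding A_def by auto
    then show ?thesis unfolding deg_def by simp
  qed
  have XS: "X k = SS A B k (m - k)" if "k \<le> m" for k
  proof
    show "X k \<subseteq> SS A B k (m - k)"
    proof
      fix E assume "E \<in> X k"
      then have E: "E \<in> Gnm n m" "deg E 3 = k" unfolding X_def by auto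
      have EU: "E \<subseteq> U" and cE: "card E = m" using GnmU[OF E(1)] by auto
      have "card (E \<inter> A) = k" using deg3[OF EU] E(2) by simp
      moreover have "card (E \<inter> B) = m - k" using cardsplit[OF EU] cE calculation by simp
      ultimately show "E \<in> SS A B k (m - k)" using EU AB unfolding SS_def by auto
    qed
    show "SS A B k (m - k) \<subseteq> X k"
    proof
      fix E assume E: "E \<in> SS A B k (m - k)"
      then have EU: "E \<subseteq> U" using AB unfolding SS_def by auto
      have "card E = m" using cardsplit[OF EU] E that unfolding SS_def by auto
      then show "E \<in> X k" using E EU deg3[OF EU] unfolding X_def Gnm_def SS_def U_def by auto
    qed
  qed
  have Xm: "X k = {}" if "k > m" for k
  proof -
    have "deg E 3 \<le> m" if "E \<in> Gnm n m" for E
      using deg3[OF GnmU(1)[OF that]] GnmU[OF that] card_mono[of E "E \<inter> A"] by auto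
    then show ?thesis unfolding X_def using that by fastforce
  qed
  have degn: "deg E 3 < n" if "E \<in> Gnm n m" for E
  proof -
    have "card (E \<inter> A) \<le> card A" using fA by (intro card_mono) auto
    then show ?thesis using deg3[OF GnmU(1)[OF that]] cardA n3 by linarith
  qed
  have finGnm: "finite (Gnm n m)"
    unfolding Gnm_def U_def[symmetric] by (rule finite_subset[of _ "Pow U"]) (use fU in auto)
  have GnmNE: "Gnm n m \<noteq> {}"
  proof -
    have "(1 - \<delta>) * N \<le> N" using \<delta>0 Npos by simp
    then have "real m \<le> N" using mle unfolding N_def by linarith
    then have "m \<le> card U" using cardU by simp
    then obtain E where "E \<subseteq> U" "card E = m" by (metis obtain_subset_with_card_n)
    then show ?thesis unfolding Gnm_def U_def by auto
  qed
  define K where "K = exp (- (l * (2 * (2 * real m / real n))))"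
  have K0: "K > 0" unfolding K_def by simp
  have fdec: "f E = K * exp (\<Sum>e\<in>E \<inter> A. \<phi> e) * wB E" if EU: "E \<subseteq> U" for E
  proof -
    have fE: "finite E" using EU fU by (auto intro: finite_subset)
    have "l * (real (deg E 1) + real (deg E 2)) = (\<Sum>e\<in>E. \<phi> e)"
      unfolding deg_sum[OF fE] \<phi>_def by (simp add: sum.distrib sum_distrib_left distrib_left)
    also have "\<dots> = (\<Sum>e\<in>E \<inter> A. \<phi> e) + (\<Sum>e\<in>E \<inter> B. \<phi> e)"
    proof -
      have "E = (E \<inter> A) \<union> (E \<inter> B)" using EU AB by auto
      moreover have "(E \<inter> A) \<inter> (E \<inter> B) = {}" using dis by auto
      ultimately show ?thesis using sum.union_disjoint[of "E \<inter> A" "E \<inter> B" \<phi>] fE by simp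
    qed
    finally have "l * (real (deg E 1) + real (deg E 2)) = (\<Sum>e\<in>E \<inter> A. \<phi> e) + (\<Sum>e\<in>E \<inter> B. \<phi> e)" .
    then show ?thesis unfolding f_def K_def wB_def
      by (simp add: right_diff_distrib exp_diff exp_add exp_minus field_simps)
  qed
  have Abound: "\<bar>\<Sum>e\<in>E \<inter> A. \<phi> e\<bar> \<le> 2 * \<bar>l\<bar>" if EU: "E \<subseteq> U" for E
  proof -
    have fE: "finite (E \<inter> A)" using fA by simp
    have d1: "deg (E \<inter> A) i \<le> 1" if "i \<noteq> 3" for i
    proof -
      have "{e \<in> E \<inter> A. i \<in> e} \<subseteq> {e \<in> all_edges n. 3 \<in> e \<and> i \<in> e}" unfolding A_def U_def by auto
      also have "\<dots> \<subseteq> {{3, i}}" by (rule edges_13) (rule that)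
      finally have "card {e \<in> E \<inter> A. i \<in> e} \<le> card {{3::nat, i}}" by (intro card_mono) auto
      then show ?thesis unfolding deg_def by simp
    qed
    have "(\<Sum>e\<in>E \<inter> A. \<phi> e) = l * (real (deg (E \<inter> A) 1) + real (deg (E \<inter> A) 2))"
      unfolding deg_sum[OF fE] \<phi>_def by (simp add: sum.distrib sum_distrib_left distrib_left)
    moreover have "real (deg (E \<inter> A) 1) + real (deg (E \<inter> A) 2) \<le> 2" using d1[of 1] d1[of 2] by simp
    moreover have "\<bar>l\<bar> * (real (deg (E \<inter> A) 1) + real (deg (E \<inter> A) 2)) \<le> \<bar>l\<bar> * 2"
      using calculation(2) by (intro mult_left_mono) auto
    ultimately show ?thesis by (simp add: abs_mult mult.commute)
  qed
  have fup: "f E \<le> K * exp (2*\<bar>l\<bar>) * wB E" and flo: "K * exp (-(2*\<bar>l\<bar>)) * wB E \<le> f E"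
    if EU: "E \<subseteq> U" for E
  proof -
    have w0: "wB E > 0" unfolding wB_def by simp
    have "exp (\<Sum>e\<in>E \<inter> A. \<phi> e) \<le> exp (2*\<bar>l\<bar>)" using Abound[OF EU] by simp
    then show "f E \<le> K * exp (2*\<bar>l\<bar>) * wB E" unfolding fdec[OF EU] using K0 w0
      by (intro mult_right_mono mult_left_mono) auto
    have "exp (-(2*\<bar>l\<bar>)) \<le> exp (\<Sum>e\<in>E \<inter> A. \<phi> e)" using Abound[OF EU] by simp
    then show "K * exp (-(2*\<bar>l\<bar>)) * wB E \<le> f E" unfolding fdec[OF EU] using K0 w0
      by (intro mult_right_mono mult_left_mono) auto
  qed
  define R where "R = (\<lambda>k. Gcond_exp n m f (\<lambda>E. deg E 3 = k))"
  have Rdef: "R k = (\<Sum>E\<in>X k. f E) / real (card (X k))" for k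
    unfolding R_def X_def Gcond_exp_def ..
  have cardGnm: "card (Gnm n m) > 0" using finGnm GnmNE by (simp add: card_gt_0_iff)
  have valid: "k \<le> m \<and> c k (m - k) > 0 \<and> X k = SS A B k (m - k)" if "k \<in> Kset" for k
  proof -
    have "Gprob n m (\<lambda>E. deg E 3 = k) > 0" using that unfolding Kset_def by auto
    then have "card (X k) > 0" unfolding Gprob_def X_def using cardGnm
      by (simp add: zero_less_divide_iff)
    then have km: "k \<le> m" using Xm by (metis card.empty less_irrefl not_le)
    then show ?thesis using \<open>card (X k) > 0\<close> XS[OF km] unfolding c_def by simp
  qed
  have Rbounds: "R k \<le> K * exp (2*\<bar>l\<bar>) * \<rho> k (m - k) \<and> K * exp (-(2*\<bar>l\<bar>)) * \<rho> k (m - k) \<le> R k"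
    if "k \<in> Kset" for k
  proof -
    note v = valid[OF that]
    have XU: "E \<subseteq> U" if "E \<in> X k" for E using that GnmU unfolding X_def by auto
    have cX: "real (card (X k)) = c k (m - k)" using v unfolding c_def by simp
    have "(\<Sum>E\<in>X k. f E) \<le> (\<Sum>E\<in>X k. K * exp (2*\<bar>l\<bar>) * wB E)"
      by (rule sum_mono) (rule fup[OF XU])
    also have "\<dots> = K * exp (2*\<bar>l\<bar>) * G k (m - k)" unfolding G_def v[THEN conjunct2, THEN conjunct2]
      by (simp add: sum_distrib_left)
    finally have 1: "R k \<le> K * exp (2*\<bar>l\<bar>) * \<rho> k (m - k)"
      unfolding Rdef \<rho>_def cX using v by (simp add: divide_right_mono)
    have "K * exp (-(2*\<bar>l\<bar>)) * G k (m - k) = (\<Sum>E\<in>X k. K * exp (-(2*\<bar>l\<bar>)) * wB E)"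
      unfolding G_def v[THEN conjunct2, THEN conjunct2] by (simp add: sum_distrib_left)
    also have "\<dots> \<le> (\<Sum>E\<in>X k. f E)"
      by (rule sum_mono) (rule flo[OF XU])
    finally have 2: "K * exp (-(2*\<bar>l\<bar>)) * \<rho> k (m - k) \<le> R k"
      unfolding Rdef \<rho>_def cX using v by (simp add: divide_right_mono)
    show ?thesis using 1 2 by simp
  qed
  define a where "a = 2*\<bar>l\<bar>"
  define Q where "Q = exp (4*\<bar>l\<bar>) * \<beta> ^ n"
  have Q1: "Q \<ge> 1"
  proof -
    have e1: "exp (4*\<bar>l\<bar>) \<ge> 1" using exp_ge_add_one_self[of "4*\<bar>l\<bar>"] by simp
    have b1: "\<beta> ^ n \<ge> 1" using beta_ge1 one_le_power by blast
    have "1 * 1 \<le> exp (4*\<bar>l\<bar>) * \<beta> ^ n" using e1 b1 by (intro mult_mono) auto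
    then show ?thesis unfolding Q_def by simp
  qed
  have QQb: "Q \<le> exp (4*\<bar>l\<bar> + 32*(exp(2*\<bar>l\<bar>)-1)/\<delta>)"
    unfolding Q_def exp_add using betan unfolding cc_def by (intro mult_left_mono) auto
  have Rpos: "R k > 0" if "k \<in> Kset" for k
  proof -
    note v = valid[OF that]
    have "\<rho> k (m - k) > 0" unfolding \<rho>_def using Gpos[of k "m-k"] v by simp
    then have "K * exp (-(2*\<bar>l\<bar>)) * \<rho> k (m - k) > 0" using K0 by simp
    then show ?thesis using Rbounds[OF that] by linarith
  qed
  have pair: "R k \<le> Q * R k'" if k: "k \<in> Kset" and k': "k' \<in> Kset" for k k'
  proof -
    note v = valid[OF k] and v' = valid[OF k']
    have kn: "k < n" "k' < n" using k k' unfolding Kset_def by auto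
    have cm: "\<rho> k (m - k) \<le> \<beta> ^ n * \<rho> k' (m - k')"
      by (rule core_main) (use v v' kn in auto)
    have "R k \<le> K * exp a * \<rho> k (m - k)" using Rbounds[OF k] unfolding a_def by simp
    also have "\<dots> \<le> K * exp a * (\<beta> ^ n * \<rho> k' (m - k'))"
      using cm K0 by (intro mult_left_mono) auto
    also have "\<dots> = exp a * exp a * \<beta> ^ n * (K * exp (-a) * \<rho> k' (m - k'))"
      by (simp add: exp_minus field_simps)
    also have "\<dots> \<le> exp a * exp a * \<beta> ^ n * R k'"
      using Rbounds[OF k'] beta_ge1 unfolding a_def by (intro mult_left_mono) auto
    also have "exp a * exp a * \<beta> ^ n = Q" unfolding Q_def a_def by (simp add: exp_add[symmetric])
    finally show ?thesis .
  qed
  have KsetX: "k \<in> Kset" if "k < n" "card (X k) > 0" for k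
    using that cardGnm unfolding Kset_def Gprob_def X_def by auto
  have finX: "finite (X k)" for k unfolding X_def using finGnm by simp
  have sumG: "(\<Sum>E\<in>Gnm n m. f E) = (\<Sum>k<n. \<Sum>E\<in>X k. f E)"
  proof -
    have "(\<lambda>E. deg E 3) ` Gnm n m \<subseteq> {..<n}" using degn by auto
    then show ?thesis unfolding X_def using sum.group[OF finGnm, of "{..<n}" "\<lambda>E. deg E 3" f] by simp
  qed
  have cardG: "real (card (Gnm n m)) = (\<Sum>k<n. real (card (X k)))"
  proof -
    have "(\<Sum>E\<in>Gnm n m. (1::real)) = (\<Sum>k<n. \<Sum>E\<in>X k. 1)"
    proof -
      have "(\<lambda>E. deg E 3) ` Gnm n m \<subseteq> {..<n}" using degn by auto
      then show ?thesis unfolding X_def using sum.group[OF finGnm, of "{..<n}" "\<lambda>E. deg E 3" "\<lambda>_. (1::real)"] by simp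
    qed
    then show ?thesis by simp
  qed
  have main: "\<bar>R k' / Gexp n m f - 1\<bar> \<le> Q - 1" if k': "k' \<in> Kset" for k'
  proof -
    have Rk': "R k' > 0" by (rule Rpos[OF k'])
    have Q0: "Q > 0" using Q1 by simp
    have each: "(\<Sum>E\<in>X k. f E) \<le> Q * R k' * real (card (X k)) \<and>
                R k' / Q * real (card (X k)) \<le> (\<Sum>E\<in>X k. f E)" if "k < n" for k
    proof (cases "card (X k) = 0")
      case True
      then have "X k = {}" using finX by simp
      then show ?thesis by simp
    next
      case False
      then have kK: "k \<in> Kset" using KsetX that by simp
      have eq: "(\<Sum>E\<in>X k. f E) = R k * real (card (X k))" unfolding Rdef using False by simp
      have 1: "R k \<le> Q * R k'" by (rule pair[OF kK k'])
      have "R k' \<le> Q * R k" by (rule pair[OF k' kK])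
      then have 2: "R k' / Q \<le> R k" using Q0 by (simp add: divide_le_eq mult.commute)
      have a1: "Q * R k' * real (card (X k)) \<ge> R k * real (card (X k))"
        using 1 by (intro mult_right_mono) auto
      have a2: "R k' / Q * real (card (X k)) \<le> R k * real (card (X k))"
        using 2 by (intro mult_right_mono) auto
      show ?thesis unfolding eq using a1 a2 by linarith
    qed
    have up: "(\<Sum>E\<in>Gnm n m. f E) \<le> Q * R k' * real (card (Gnm n m))"
      unfolding sumG cardG sum_distrib_left using each by (intro sum_mono) auto
    have lo: "R k' / Q * real (card (Gnm n m)) \<le> (\<Sum>E\<in>Gnm n m. f E)"
      unfolding sumG cardG sum_distrib_left using each by (intro sum_mono) auto
    have cg: "real (card (Gnm n m)) > 0" using cardGnm by simp
    define g where "g = Gexp n m f"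
    have gdef: "g = (\<Sum>E\<in>Gnm n m. f E) / real (card (Gnm n m))" unfolding g_def Gexp_def ..
    have gup: "g \<le> Q * R k'" unfolding gdef using up cg by (simp add: divide_le_eq)
    have glo: "R k' / Q \<le> g" unfolding gdef using lo cg by (simp add: le_divide_eq)
    have g0: "g > 0" using glo Rk' Q0 by (smt (verit) divide_pos_pos)
    have r1: "R k' / g \<le> Q" using glo g0 Q0 by (simp add: divide_le_eq mult.commute)
    have r2: "1 / Q \<le> R k' / g" using gup g0 Q0 by (simp add: divide_le_eq le_divide_eq mult.commute)
    have "1 - 1 / Q \<le> Q - 1"
    proof -
      have "(Q - 1) * (Q - 1) \<ge> 0" by simp
      then have "Q - 1 \<le> Q * (Q - 1)" by (simp add: algebra_simps)
      then show ?thesis using Q0 by (simp add: field_simps)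
    qed
    then show ?thesis using r1 r2 unfolding g_def by linarith
  qed
  have ne: "Kset \<noteq> {}"
  proof -
    obtain E where E: "E \<in> Gnm n m" using GnmNE by auto
    have "E \<in> X (deg E 3)" unfolding X_def using E by simp
    then have "card (X (deg E 3)) > 0" using finX by (auto simp: card_gt_0_iff)
    then show ?thesis using KsetX degn[OF E] by auto
  qed
  show ?thesis using ne main QQb unfolding R_def by fastforce
qed

theorem mainTheorem18:
  fixes \<delta> :: real and m :: "nat \<Rightarrow> nat" and lam :: "nat \<Rightarrow> real"
  assumes "0 < \<delta>" and "\<delta> < 1"
    and "eventually (\<lambda>n. 1 \<le> m n \<and> real (m n) \<le> (1 - \<delta>) * real (n choose 2)) at_top"
    and "lam \<longlonglongrightarrow> 0"
  shows "(\<lambda>n. SUP k \<in> {k. k < n \<and> Gprob n (m n) (\<lambda>E. deg E 3 = k) > 0}.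
            \<bar>Gcond_exp n (m n)
                (\<lambda>E. exp (lam n * (real (deg E 1) + real (deg E 2) - 2 * (2 * real (m n) / real n))))
                (\<lambda>E. deg E 3 = k)
             / Gexp n (m n)
                (\<lambda>E. exp (lam n * (real (deg E 1) + real (deg E 2) - 2 * (2 * real (m n) / real n))))
             - 1\<bar>) \<longlonglongrightarrow> 0"
proof -
  define Qb where "Qb n = exp (4*\<bar>lam n\<bar> + 32*(exp(2*\<bar>lam n\<bar>)-1)/\<delta>)" for n
  have la: "(\<lambda>n. \<bar>lam n\<bar>) \<longlonglongrightarrow> 0" using assms(4) by (simp add: tendsto_rabs_zero)
  have "Qb \<longlonglongrightarrow> exp (4*0 + 32*(exp(2*0)-1)/\<delta>)" unfolding Qb_def
    using assms(1) by (intro tendsto_intros la) auto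
  then have lim: "(\<lambda>n. Qb n - 1) \<longlonglongrightarrow> 0"
    using tendsto_diff[of Qb 1 sequentially "\<lambda>_. 1" 1] by simp
  have "(\<lambda>n. exp (2*\<bar>lam n\<bar>)) \<longlonglongrightarrow> exp (2*0)" by (intro tendsto_intros la)
  then have "eventually (\<lambda>n. exp (2*\<bar>lam n\<bar>) < 2) sequentially"
    by (intro order_tendstoD(2)) auto
  then have ev1: "eventually (\<lambda>n. exp (2*\<bar>lam n\<bar>) - 1 \<le> 1) sequentially"
    by eventually_elim simp
  have ev2: "eventually (\<lambda>n. n \<ge> 3 \<and> 5 * real n \<le> \<delta> * real (n choose 2)) sequentially"
  proof -
    have "eventually (\<lambda>n. n \<ge> max 3 (nat \<lceil>10/\<delta>\<rceil> + 1)) sequentially"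
      by (rule eventually_ge_at_top)
    then show ?thesis
    proof eventually_elim
      case (elim n)
      then have n3: "n \<ge> 3" and "n \<ge> nat \<lceil>10/\<delta>\<rceil> + 1" by auto
      then have "real n - 1 \<ge> 10/\<delta>" by linarith
      then have "\<delta> * (real n - 1) \<ge> 10" using assms(1) by (simp add: field_simps)
      then have "real n * (\<delta> * (real n - 1)) \<ge> real n * 10" by (intro mult_left_mono) auto
      then show ?case using n3 unfolding real_choose2 by (simp add: algebra_simps)
    qed
  qed
  have ev: "eventually (\<lambda>n. 0 \<le> (SUP k \<in> {k. k < n \<and> Gprob n (m n) (\<lambda>E. deg E 3 = k) > 0}.
            \<bar>Gcond_exp n (m n)
                (\<lambda>E. exp (lam n * (real (deg E 1) + real (deg E 2) - 2 * (2 * real (m n) / real n))))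
                (\<lambda>E. deg E 3 = k)
             / Gexp n (m n)
                (\<lambda>E. exp (lam n * (real (deg E 1) + real (deg E 2) - 2 * (2 * real (m n) / real n))))
             - 1\<bar>) \<and> (SUP k \<in> {k. k < n \<and> Gprob n (m n) (\<lambda>E. deg E 3 = k) > 0}.
            \<bar>Gcond_exp n (m n)
                (\<lambda>E. exp (lam n * (real (deg E 1) + real (deg E 2) - 2 * (2 * real (m n) / real n))))
                (\<lambda>E. deg E 3 = k)
             / Gexp n (m n)
                (\<lambda>E. exp (lam n * (real (deg E 1) + real (deg E 2) - 2 * (2 * real (m n) / real n))))
             - 1\<bar>) \<le> Qb n - 1) sequentially"
    using assms(3) ev1 ev2
  proof eventually_elim
    case (elim n)
    note fx = fixed_n[where n=n and m="m n" and l="lam n" and \<delta>=\<delta>]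
    have h: "{k. k < n \<and> Gprob n (m n) (\<lambda>E. deg E 3 = k) > 0} \<noteq> {} \<and>
      (\<forall>k\<in>{k. k < n \<and> Gprob n (m n) (\<lambda>E. deg E 3 = k) > 0}. \<bar>Gcond_exp n (m n)
                (\<lambda>E. exp (lam n * (real (deg E 1) + real (deg E 2) - 2 * (2 * real (m n) / real n))))
                (\<lambda>E. deg E 3 = k)
             / Gexp n (m n)
                (\<lambda>E. exp (lam n * (real (deg E 1) + real (deg E 2) - 2 * (2 * real (m n) / real n))))
             - 1\<bar> \<le> Qb n - 1)"
      unfolding Qb_def by (rule fx) (use elim assms(1) in auto)
    then obtain k0 where k0: "k0 \<in> {k. k < n \<and> Gprob n (m n) (\<lambda>E. deg E 3 = k) > 0}" by blast
    have bdd: "bdd_above ((\<lambda>k. \<bar>Gcond_exp n (m n)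
                (\<lambda>E. exp (lam n * (real (deg E 1) + real (deg E 2) - 2 * (2 * real (m n) / real n))))
                (\<lambda>E. deg E 3 = k)
             / Gexp n (m n)
                (\<lambda>E. exp (lam n * (real (deg E 1) + real (deg E 2) - 2 * (2 * real (m n) / real n))))
             - 1\<bar>) ` {k. k < n \<and> Gprob n (m n) (\<lambda>E. deg E 3 = k) > 0})"
      using h by (intro bdd_aboveI2[where M = "Qb n - 1"]) blast
    show ?case
    proof
      show "0 \<le> (SUP k \<in> {k. k < n \<and> Gprob n (m n) (\<lambda>E. deg E 3 = k) > 0}.
            \<bar>Gcond_exp n (m n)
                (\<lambda>E. exp (lam n * (real (deg E 1) + real (deg E 2) - 2 * (2 * real (m n) / real n))))
                (\<lambda>E. deg E 3 = k)
             / Gexp n (m n)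
                (\<lambda>E. exp (lam n * (real (deg E 1) + real (deg E 2) - 2 * (2 * real (m n) / real n))))
             - 1\<bar>)"
        by (rule order_trans[OF abs_ge_zero cSUP_upper[OF k0 bdd]])
      show "(SUP k \<in> {k. k < n \<and> Gprob n (m n) (\<lambda>E. deg E 3 = k) > 0}.
            \<bar>Gcond_exp n (m n)
                (\<lambda>E. exp (lam n * (real (deg E 1) + real (deg E 2) - 2 * (2 * real (m n) / real n))))
                (\<lambda>E. deg E 3 = k)
             / Gexp n (m n)
                (\<lambda>E. exp (lam n * (real (deg E 1) + real (deg E 2) - 2 * (2 * real (m n) / real n))))
             - 1\<bar>) \<le> Qb n - 1"
        using h by (intro cSUP_least) auto
    qed
  qed
  show ?thesis
    by (rule tendsto_sandwich[OF _ _ tendsto_const lim]) (use ev in \<open>eventually_elim, auto\<close>)+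
qed

end
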